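(* Let $u$ be a recurrent aperiodic infinite word over $\{0,\ldots,q-1\}$. The valid permutation $\alpha_u$ is ergodic if and only if for every factor $w$ of $u$ the uniform frequency $\rho_w(u)$ exists and $\rho_w(u)\neq 0$.
   Context: For an aperiodic infinite word $u$ over $\{0,\ldots,q-1\}$ with shifts $T^n u=u[n]u[n+1]\cdots$, the valid permutation $\alpha_u$ is the infinite permutation represented by the sequence $(0.T^n u)_{n\ge0}$ of real numbers written in base $q$; equivalently $\alpha_u[i]<\alpha_u[j]$ iff $T^i u$ is lexicographically smaller than $T^j u$. An infinite permutation is an equivalence class of real sequences with pairwise distinct elements, two sequences $(a[n]),(b[n])$ being equivalent iff $a[i]<a[j]\Leftrightarrow b[i]<b[j]$ for all $i,j$. A real sequence $(a[i])_{i\ge 0}$ is canonical if its elements are pairwise distinct, lie in $[0,1]$, and for every $t\in[0,1]$ the ratio $\#\{0\le k<n: a[j+k]<t\}/n\to t$ as $n\to\infty$ uniformly in $j$; a permutation is ergodic if it has a canonical representative. For a factor $w$ of $u$, the uniform frequency $\rho_w(u)$ exists if $|u[i..i+n]|_w/(n+1)$ converges to $\rho_w(u)$ as $n\to\infty$ uniformly in $i$, where $|x|_w$ is the number of occurrences of $w$ in $x$. *)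

theory Defs
  imports Complex_Main
begin

text \<open>Infinite words are functions nat => nat; the alphabet is {0..q-1}.\<close>

definition shift :: "nat \<Rightarrow> (nat \<Rightarrow> nat) \<Rightarrow> (nat \<Rightarrow> nat)" where
  "shift n u = (\<lambda>k. u (n + k))"

definition lex_less :: "(nat \<Rightarrow> nat) \<Rightarrow> (nat \<Rightarrow> nat) \<Rightarrow> bool" where
  "lex_less x y \<longleftrightarrow> (\<exists>k. (\<forall>m<k. x m = y m) \<and> x k < y k)"

definition aperiodic :: "(nat \<Rightarrow> nat) \<Rightarrow> bool" where
  "aperiodic u \<longleftrightarrow> \<not> (\<exists>p>0. \<exists>N. \<forall>n\<ge>N. u (n + p) = u n)"

definition occurs_at :: "nat list \<Rightarrow> (nat \<Rightarrow> nat) \<Rightarrow> nat \<Rightarrow> bool" where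
  "occurs_at w u i \<longleftrightarrow> (\<forall>k<length w. u (i + k) = w ! k)"

definition factor :: "nat list \<Rightarrow> (nat \<Rightarrow> nat) \<Rightarrow> bool" where
  "factor w u \<longleftrightarrow> (\<exists>i. occurs_at w u i)"

definition recurrent :: "(nat \<Rightarrow> nat) \<Rightarrow> bool" where
  "recurrent u \<longleftrightarrow> (\<forall>w. factor w u \<longrightarrow> infinite {i. occurs_at w u i})"

text \<open>Number of occurrences of w in the finite factor u[i..i+n] (length n+1).\<close>
definition occ_count :: "(nat \<Rightarrow> nat) \<Rightarrow> nat list \<Rightarrow> nat \<Rightarrow> nat \<Rightarrow> nat" where
  "occ_count u w i n = card {p. i \<le> p \<and> p + length w \<le> i + n + 1 \<and> occurs_at w u p}"

definition has_uniform_freq :: "(nat \<Rightarrow> nat) \<Rightarrow> nat list \<Rightarrow> real \<Rightarrow> bool" where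
  "has_uniform_freq u w \<rho> \<longleftrightarrow>
     (\<forall>\<epsilon>>0. \<exists>N. \<forall>n\<ge>N. \<forall>i. \<bar>real (occ_count u w i n) / real (n + 1) - \<rho>\<bar> < \<epsilon>)"

definition canonical :: "(nat \<Rightarrow> real) \<Rightarrow> bool" where
  "canonical a \<longleftrightarrow> inj a \<and> (\<forall>i. 0 \<le> a i \<and> a i \<le> 1) \<and>
     (\<forall>t\<in>{0..1}. \<forall>\<epsilon>>0. \<exists>N. \<forall>n\<ge>N. \<forall>j.
        \<bar>real (card {k. k < n \<and> a (j + k) < t}) / real n - t\<bar> < \<epsilon>)"

text \<open>An infinite permutation, given by its order relation on indices
  (the common order type of all representing sequences), is ergodic
  iff it has a canonical representative.\<close>
definition ergodic_perm :: "(nat \<Rightarrow> nat \<Rightarrow> bool) \<Rightarrow> bool" where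
  "ergodic_perm R \<longleftrightarrow> (\<exists>a. canonical a \<and> (\<forall>i j. a i < a j \<longleftrightarrow> R i j))"

definition valid_perm :: "(nat \<Rightarrow> nat) \<Rightarrow> nat \<Rightarrow> nat \<Rightarrow> bool" where
  "valid_perm u i j \<longleftrightarrow> lex_less (shift i u) (shift j u)"

end

theory Submission
  imports Defs
begin

lemma lex_irrefl: "\<not> lex_less x x"
  unfolding lex_less_def by auto

lemma lex_asym: assumes "lex_less x y" shows "\<not> lex_less y x"
proof
  assume "lex_less y x"
  from assms obtain k where k: "\<forall>m<k. x m = y m" "x k < y k" unfolding lex_less_def by auto
  from \<open>lex_less y x\<close> obtain l where l: "\<forall>m<l. y m = x m" "y l < x l" unfolding lex_less_def by auto
  show False
  proof (cases "k < l")
    case True then show ?thesis using k l by (metis less_irrefl)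
  next
    case False
    then have "l < k \<or> l = k" by auto
    then show ?thesis using k l by (metis less_asym)
  qed
qed

lemma lex_total: assumes "x \<noteq> y" shows "lex_less x y \<or> lex_less y x"
proof -
  from assms obtain k where "x k \<noteq> y k" by auto
  define p where "p = (LEAST k. x k \<noteq> y k)"
  have p1: "x p \<noteq> y p" unfolding p_def by (rule LeastI) fact
  have p2: "\<forall>m<p. x m = y m" unfolding p_def using not_less_Least by blast
  show ?thesis
  proof (cases "x p < y p")
    case True then show ?thesis unfolding lex_less_def using p2 by blast
  next
    case False then have "y p < x p" using p1 by auto
    then show ?thesis unfolding lex_less_def using p2 by (metis)
  qed
qed

definition uconv :: "(nat \<Rightarrow> nat \<Rightarrow> real) \<Rightarrow> real \<Rightarrow> bool" where
  "uconv f L \<longleftrightarrow> (\<forall>\<epsilon>>0. \<exists>N. \<forall>n\<ge>N. \<forall>j. \<bar>f j n - L\<bar> < \<epsilon>)"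

lemma huf_uconv: "has_uniform_freq u w r \<longleftrightarrow> uconv (\<lambda>j n. real (occ_count u w j n) / real (n+1)) r"
  unfolding has_uniform_freq_def uconv_def by simp

lemma uconv_unique: assumes "uconv f L1" "uconv f L2" shows "L1 = L2"
proof (rule ccontr)
  assume ne: "L1 \<noteq> L2"
  define e where "e = \<bar>L1 - L2\<bar> / 2"
  have e: "e > 0" using ne unfolding e_def by auto
  obtain N1 where N1: "\<forall>n\<ge>N1. \<forall>j. \<bar>f j n - L1\<bar> < e" using assms(1) e unfolding uconv_def by blast
  obtain N2 where N2: "\<forall>n\<ge>N2. \<forall>j. \<bar>f j n - L2\<bar> < e" using assms(2) e unfolding uconv_def by blast
  have "\<bar>f 0 (max N1 N2) - L1\<bar> < e" "\<bar>f 0 (max N1 N2) - L2\<bar> < e" using N1 N2 by auto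
  then show False unfolding e_def by (auto simp: abs_if split: if_splits)
qed

lemma uconv_const: "uconv (\<lambda>j n. c) c"
  unfolding uconv_def by auto

lemma uconv_add: assumes "uconv f L" "uconv g M" shows "uconv (\<lambda>j n. f j n + g j n) (L + M)"
  unfolding uconv_def
proof (intro allI impI)
  fix e :: real assume e: "e > 0"
  obtain N1 where N1: "\<forall>n\<ge>N1. \<forall>j. \<bar>f j n - L\<bar> < e/2" using assms(1) e unfolding uconv_def by (meson half_gt_zero)
  obtain N2 where N2: "\<forall>n\<ge>N2. \<forall>j. \<bar>g j n - M\<bar> < e/2" using assms(2) e unfolding uconv_def by (meson half_gt_zero)
  show "\<exists>N. \<forall>n\<ge>N. \<forall>j. \<bar>f j n + g j n - (L + M)\<bar> < e"
  proof (intro exI allI impI)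
    fix n j assume "max N1 N2 \<le> n"
    then have "\<bar>f j n - L\<bar> < e/2" "\<bar>g j n - M\<bar> < e/2" using N1 N2 by auto
    then show "\<bar>f j n + g j n - (L + M)\<bar> < e" by linarith
  qed
qed

lemma uconv_neg: assumes "uconv f L" shows "uconv (\<lambda>j n. - f j n) (- L)"
  using assms unfolding uconv_def
proof -
  assume a: "\<forall>\<epsilon>>0. \<exists>N. \<forall>n\<ge>N. \<forall>j. \<bar>f j n - L\<bar> < \<epsilon>"
  have "\<And>j n. \<bar>- f j n - - L\<bar> = \<bar>f j n - L\<bar>" by linarith
  then show "\<forall>\<epsilon>>0. \<exists>N. \<forall>n\<ge>N. \<forall>j. \<bar>- f j n - - L\<bar> < \<epsilon>" using a by simp
qed

lemma uconv_diff: assumes "uconv f L" "uconv g M" shows "uconv (\<lambda>j n. f j n - g j n) (L - M)"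
  using uconv_add[OF assms(1) uconv_neg[OF assms(2)]] by simp

lemma uconv_sum: assumes "finite S" "\<And>w. w \<in> S \<Longrightarrow> uconv (f w) (L w)"
  shows "uconv (\<lambda>j n. \<Sum>w\<in>S. f w j n) (\<Sum>w\<in>S. L w)"
  using assms
proof (induction S rule: finite_induct)
  case empty then show ?case by (simp add: uconv_const)
next
  case (insert x F)
  then show ?case by (simp add: uconv_add)
qed

lemma uconv_shift: assumes "uconv f L" shows "uconv (\<lambda>j n. f j (Suc n)) L"
  using assms unfolding uconv_def by (meson le_SucI)

lemma uconv_close:
  assumes "uconv f L" "\<And>j n. \<bar>g j n - f j n\<bar> \<le> C / real (n+1)"
  shows "uconv g L"
  unfolding uconv_def
proof (intro allI impI)
  fix e :: real assume e: "e > 0"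
  obtain N1 where N1: "\<forall>n\<ge>N1. \<forall>j. \<bar>f j n - L\<bar> < e/2" using assms(1) e unfolding uconv_def by (meson half_gt_zero)
  obtain N2 :: nat where N2: "real N2 > 2 * \<bar>C\<bar> / e" using reals_Archimedean2 by blast
  show "\<exists>N. \<forall>n\<ge>N. \<forall>j. \<bar>g j n - L\<bar> < e"
  proof (intro exI allI impI)
    fix n j assume n: "max N1 N2 \<le> n"
    then have a: "\<bar>f j n - L\<bar> < e/2" using N1 by auto
    have "real N2 \<le> real n" using n by auto
    then have "2 * \<bar>C\<bar> / e < real (n+1)" using N2 by simp
    then have "2 * \<bar>C\<bar> < e * real (n+1)" using e by (simp add: divide_less_eq mult.commute)
    then have "\<bar>C\<bar> / real (n+1) < e/2" by (simp add: divide_less_eq mult.commute)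
    moreover have "C / real (n+1) \<le> \<bar>C\<bar> / real (n+1)" by (simp add: divide_right_mono)
    ultimately have "C / real (n+1) < e/2" by linarith
    then show "\<bar>g j n - L\<bar> < e" using a assms(2)[of j n] by linarith
  qed
qed

lemma occ_convex:
  assumes "occurs_at w u k1" "occurs_at w u k2"
    "lex_less (shift k1 u) (shift k u)" "lex_less (shift k u) (shift k2 u)"
  shows "occurs_at w u k"
proof (rule ccontr)
  assume nk: "\<not> occurs_at w u k"
  then have ex: "\<exists>p. p < length w \<and> u (k+p) \<noteq> w ! p" unfolding occurs_at_def by auto
  define p where "p = (LEAST p. p < length w \<and> u (k+p) \<noteq> w ! p)"
  have p1: "p < length w \<and> u (k+p) \<noteq> w ! p" unfolding p_def using LeastI_ex[OF ex] .
  have p2: "\<And>m. m < p \<Longrightarrow> u (k+m) = w ! m"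
  proof -
    fix m assume "m < p"
    then have "\<not> (m < length w \<and> u (k+m) \<noteq> w ! m)" unfolding p_def using not_less_Least by blast
    then show "u (k+m) = w ! m" using \<open>m < p\<close> p1 by auto
  qed
  have o1: "\<And>m. m < length w \<Longrightarrow> u (k1+m) = w ! m" using assms(1) unfolding occurs_at_def by auto
  have o2: "\<And>m. m < length w \<Longrightarrow> u (k2+m) = w ! m" using assms(2) unfolding occurs_at_def by auto
  obtain m where m: "\<forall>m'<m. u (k1+m') = u (k+m')" "u (k1+m) < u (k+m)"
    using assms(3) unfolding lex_less_def shift_def by auto
  obtain l where l: "\<forall>m'<l. u (k+m') = u (k2+m')" "u (k+l) < u (k2+l)"
    using assms(4) unfolding lex_less_def shift_def by auto
  have "m = p"
  proof (rule ccontr)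
    assume "m \<noteq> p"
    then consider "m < p" | "p < m" by linarith
    then show False
    proof cases
      case 1
      then have "m < length w" using p1 by simp
      then show ?thesis using m(2) p2[OF 1] o1[of m] by simp
    next
      case 2 then show ?thesis using m(1)[rule_format, OF 2] p1 o1[of p] by simp
    qed
  qed
  have "l = p"
  proof (rule ccontr)
    assume "l \<noteq> p"
    then consider "l < p" | "p < l" by linarith
    then show False
    proof cases
      case 1
      then have "l < length w" using p1 by simp
      then show ?thesis using l(2) p2[OF 1] o2[of l] by simp
    next
      case 2 then show ?thesis using l(1)[rule_format, OF 2] p1 o2[of p] by simp
    qed
  qed
  have "u (k1+p) < u (k+p)" "u (k+p) < u (k2+p)" using m(2) l(2) \<open>m = p\<close> \<open>l = p\<close> by auto
  then show False using o1[of p] o2[of p] p1 by simp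
qed

lemma finite_occset: "finite {p. j \<le> p \<and> p + length w \<le> j + n + 1 \<and> occurs_at w u p}"
  by (rule finite_subset[of _ "{..j+n+1}"]) auto

lemma occ_count_window1:
  assumes "w \<noteq> []"
  shows "occ_count u w j n \<le> card {k. k < Suc n \<and> occurs_at w u (j+k)}"
proof -
  have "{p. j \<le> p \<and> p + length w \<le> j + n + 1 \<and> occurs_at w u p} \<subseteq> (\<lambda>k. j+k) ` {k. k < Suc n \<and> occurs_at w u (j+k)}"
  proof
    fix p assume "p \<in> {p. j \<le> p \<and> p + length w \<le> j + n + 1 \<and> occurs_at w u p}"
    then have "p - j < Suc n \<and> occurs_at w u (j + (p - j)) \<and> p = j + (p - j)" using assms by (cases w) auto
    then show "p \<in> (\<lambda>k. j+k) ` {k. k < Suc n \<and> occurs_at w u (j+k)}" by blast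
  qed
  then have "occ_count u w j n \<le> card ((\<lambda>k. j+k) ` {k. k < Suc n \<and> occurs_at w u (j+k)})"
    unfolding occ_count_def by (intro card_mono) auto
  also have "\<dots> \<le> card {k. k < Suc n \<and> occurs_at w u (j+k)}" by (rule card_image_le) auto
  finally show ?thesis .
qed

lemma occ_count_window2:
  "card {k. k < Suc n \<and> occurs_at w u (j+k)} \<le> occ_count u w j n + length w"
proof -
  have "{k. k < Suc n \<and> occurs_at w u (j+k)} \<subseteq>
     (\<lambda>p. p - j) ` {p. j \<le> p \<and> p + length w \<le> j + n + 1 \<and> occurs_at w u p} \<union> {Suc n - length w..<Suc n}"
  proof
    fix k assume k: "k \<in> {k. k < Suc n \<and> occurs_at w u (j+k)}"
    show "k \<in> (\<lambda>p. p - j) ` {p. j \<le> p \<and> p + length w \<le> j + n + 1 \<and> occurs_at w u p} \<union> {Suc n - length w..<Suc n}"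
    proof (cases "k + length w \<le> n + 1")
      case True
      then have "j + k \<in> {p. j \<le> p \<and> p + length w \<le> j + n + 1 \<and> occurs_at w u p}" using k by auto
      then show ?thesis by (metis (no_types, lifting) UnI1 add_diff_cancel_left' image_eqI)
    next
      case False then show ?thesis using k by auto
    qed
  qed
  then have "card {k. k < Suc n \<and> occurs_at w u (j+k)} \<le>
     card ((\<lambda>p. p - j) ` {p. j \<le> p \<and> p + length w \<le> j + n + 1 \<and> occurs_at w u p} \<union> {Suc n - length w..<Suc n})"
  proof (intro card_mono)
    have "finite {p. j \<le> p \<and> p + length w \<le> j + n + 1 \<and> occurs_at w u p}"
      by (rule finite_subset[of _ "{..j+n+1}"]) auto
    then show "finite ((\<lambda>p. p - j) ` {p. j \<le> p \<and> p + length w \<le> j + n + 1 \<and> occurs_at w u p} \<union> {Suc n - length w..<Suc n})" by auto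
  qed assumption
  also have "\<dots> \<le> card ((\<lambda>p. p - j) ` {p. j \<le> p \<and> p + length w \<le> j + n + 1 \<and> occurs_at w u p}) + card {Suc n - length w..<Suc n}"
    by (rule card_Un_le)
  also have "\<dots> \<le> occ_count u w j n + length w"
    unfolding occ_count_def using finite_occset[of j w n u] by (intro add_mono card_image_le) auto
  finally show ?thesis .
qed

lemma card_le1_inj:
  fixes a :: "nat \<Rightarrow> real" and j n :: nat
  assumes "inj a"
  shows "card {k. k < n \<and> a (j+k) = c} \<le> 1"
proof -
  have "\<forall>x\<in>{k. k < n \<and> a (j+k) = c}. \<forall>y\<in>{k. k < n \<and> a (j+k) = c}. x = y"
  proof (intro ballI)
    fix x y assume "x \<in> {k. k < n \<and> a (j+k) = c}" "y \<in> {k. k < n \<and> a (j+k) = c}"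
    then have "a (j+x) = a (j+y)" by simp
    then have "j + x = j + y" by (rule injD[OF assms])
    then show "x = y" by simp
  qed
  then show ?thesis using card_le_Suc0_iff_eq[of "{k. k < n \<and> a (j+k) = c}"] by auto
qed

lemma canonical_uconv:
  assumes "canonical a" "0 \<le> t" "t \<le> 1"
  shows "uconv (\<lambda>j n. real (card {k. k < Suc n \<and> a (j+k) < t}) / real (n+1)) t"
proof -
  have "uconv (\<lambda>j n. real (card {k. k < n \<and> a (j+k) < t}) / real n) t"
    using assms unfolding canonical_def uconv_def by auto
  from uconv_shift[OF this] show ?thesis by simp
qed

lemma dir1:
  assumes can: "canonical a" and ord: "\<forall>i j. a i < a j \<longleftrightarrow> valid_perm u i j"
    and rec: "recurrent u" and wne: "w \<noteq> []" and fw: "factor w u"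
  shows "\<exists>\<rho>. has_uniform_freq u w \<rho> \<and> \<rho> \<noteq> 0"
proof -
  define Oc where "Oc = {k. occurs_at w u k}"
  have infO: "infinite Oc" using rec fw unfolding recurrent_def Oc_def by auto
  have inja: "inj a" and a01: "\<And>i. 0 \<le> a i \<and> a i \<le> 1" using can unfolding canonical_def by auto
  obtain k1 where k1: "k1 \<in> Oc" using infO by (metis finite.emptyI ex_in_conv)
  obtain k2 where k2: "k2 \<in> Oc" "k2 \<noteq> k1" using infO by (metis finite_insert infinite_remove insert_Diff k1 ex_in_conv finite.emptyI Diff_iff singletonI)
  define \<alpha> where "\<alpha> = Inf (a ` Oc)"
  define \<beta> where "\<beta> = Sup (a ` Oc)"
  have ne: "a ` Oc \<noteq> {}" using k1 by auto
  have bb: "bdd_below (a ` Oc)" using a01 by (auto intro: bdd_belowI[of _ 0])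
  have ba: "bdd_above (a ` Oc)" using a01 by (auto intro: bdd_aboveI[of _ 1])
  have lo: "\<And>k. k \<in> Oc \<Longrightarrow> \<alpha> \<le> a k" unfolding \<alpha>_def using bb by (auto intro: cInf_lower)
  have hi: "\<And>k. k \<in> Oc \<Longrightarrow> a k \<le> \<beta>" unfolding \<beta>_def using ba by (auto intro: cSup_upper)
  have "a k1 \<noteq> a k2" using inja k2 by (auto dest: injD)
  then have ab: "\<alpha> < \<beta>" using lo[OF k1] lo[OF k2(1)] hi[OF k1] hi[OF k2(1)] by linarith
  have a0: "0 \<le> \<alpha>" unfolding \<alpha>_def using ne a01 by (auto intro: cInf_greatest)
  have b1: "\<beta> \<le> 1" unfolding \<beta>_def using ne a01 by (auto intro: cSup_least)
  have inner: "k \<in> Oc" if "\<alpha> < a k" "a k < \<beta>" for k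
  proof -
    have "Inf (a ` Oc) < a k" using that(1) unfolding \<alpha>_def .
    then obtain x1 where x1: "x1 \<in> Oc" "a x1 < a k" using cInf_less_iff[OF ne bb] by auto
    have "a k < Sup (a ` Oc)" using that(2) unfolding \<beta>_def .
    then obtain x2 where x2: "x2 \<in> Oc" "a k < a x2" using less_cSup_iff[OF ne ba] by auto
    have "lex_less (shift x1 u) (shift k u)" "lex_less (shift k u) (shift x2 u)"
      using ord x1 x2 unfolding valid_perm_def by auto
    then show ?thesis using occ_convex[of w u x1 x2 k] x1 x2 unfolding Oc_def by auto
  qed
  define cnt where "cnt t j n = card {k. k < n \<and> a (j+k) < t}" for t j n
  define oc where "oc j n = card {k. k < n \<and> j + k \<in> Oc}" for j n
  have key: "real (cnt \<beta> j n) - real (cnt \<alpha> j n) - 1 \<le> real (oc j n) \<and>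
             real (oc j n) \<le> real (cnt \<beta> j n) - real (cnt \<alpha> j n) + 1" for j n
  proof -
    define L where "L = {k. k < n \<and> a (j+k) < \<alpha>}"
    define L' where "L' = {k. k < n \<and> a (j+k) \<le> \<alpha>}"
    define B where "B = {k. k < n \<and> a (j+k) < \<beta>}"
    define I where "I = {k. k < n \<and> \<alpha> < a (j+k) \<and> a (j+k) < \<beta>}"
    define Ic where "Ic = {k. k < n \<and> \<alpha> \<le> a (j+k) \<and> a (j+k) \<le> \<beta>}"
    define Occ where "Occ = {k. k < n \<and> j + k \<in> Oc}"
    define Ea where "Ea = {k. k < n \<and> a (j+k) = \<alpha>}"
    define Eb where "Eb = {k. k < n \<and> a (j+k) = \<beta>}"
    have fin: "finite L" "finite L'" "finite B" "finite I" "finite Ic" "finite Occ" "finite Ea" "finite Eb"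
      unfolding L_def L'_def B_def I_def Ic_def Occ_def Ea_def Eb_def by auto
    have cEa: "card Ea \<le> 1" unfolding Ea_def by (rule card_le1_inj[OF inja])
    have cEb: "card Eb \<le> 1" unfolding Eb_def by (rule card_le1_inj[OF inja])
    have "I \<subseteq> Occ" unfolding I_def Occ_def using inner by auto
    then have s1: "card I \<le> card Occ" using fin by (intro card_mono) auto
    have "Occ \<subseteq> Ic" unfolding Occ_def Ic_def using lo hi by auto
    then have s2: "card Occ \<le> card Ic" using fin by (intro card_mono) auto
    have "B = L' \<union> I" "L' \<inter> I = {}" unfolding B_def L'_def I_def using ab by auto
    then have s3: "card B = card L' + card I" using fin by (simp add: card_Un_disjoint)
    have "L' \<subseteq> L \<union> Ea" unfolding L'_def L_def Ea_def by auto
    then have "card L' \<le> card (L \<union> Ea)" using fin by (intro card_mono) auto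
    then have s4: "card L' \<le> card L + 1" using card_Un_le[of L Ea] cEa by linarith
    have "Ic \<union> L \<subseteq> B \<union> Eb" "Ic \<inter> L = {}" unfolding Ic_def L_def B_def Eb_def using ab by auto
    then have "card Ic + card L \<le> card (B \<union> Eb)" using fin card_Un_disjoint[of Ic L] card_mono[of "B \<union> Eb" "Ic \<union> L"] by auto
    then have s5: "card Ic + card L \<le> card B + 1" using card_Un_le[of B Eb] cEb by linarith
    have e: "cnt \<beta> j n = card B" "cnt \<alpha> j n = card L" "oc j n = card Occ"
      unfolding cnt_def B_def L_def oc_def Occ_def by auto
    show ?thesis unfolding e using s1 s2 s3 s4 s5 by linarith
  qed
  have U: "uconv (\<lambda>j n. real (cnt \<beta> j (Suc n)) / real (n+1) - real (cnt \<alpha> j (Suc n)) / real (n+1)) (\<beta> - \<alpha>)"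
    unfolding cnt_def
    by (rule uconv_diff; rule canonical_uconv[OF can]) (use a0 b1 ab in auto)
  have "uconv (\<lambda>j n. real (occ_count u w j n) / real (n+1)) (\<beta> - \<alpha>)"
  proof (rule uconv_close[OF U, where C = "1 + real (length w)"])
    fix j n
    have w1: "occ_count u w j n \<le> oc j (Suc n)" unfolding oc_def Oc_def using occ_count_window1[OF wne] by simp
    have w2: "oc j (Suc n) \<le> occ_count u w j n + length w" unfolding oc_def Oc_def using occ_count_window2 by simp
    have "\<bar>real (occ_count u w j n) - (real (cnt \<beta> j (Suc n)) - real (cnt \<alpha> j (Suc n)))\<bar> \<le> 1 + real (length w)"
      using key[of j "Suc n"] w1 w2 by linarith
    then have "\<bar>real (occ_count u w j n) - (real (cnt \<beta> j (Suc n)) - real (cnt \<alpha> j (Suc n)))\<bar> / real (n+1) \<le> (1 + real (length w)) / real (n+1)"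
      by (simp add: divide_right_mono)
    moreover have "real (occ_count u w j n) / real (n+1) - (real (cnt \<beta> j (Suc n)) / real (n+1) - real (cnt \<alpha> j (Suc n)) / real (n+1))
        = (real (occ_count u w j n) - (real (cnt \<beta> j (Suc n)) - real (cnt \<alpha> j (Suc n)))) / real (n+1)"
      by (simp add: diff_divide_distrib)
    ultimately show "\<bar>real (occ_count u w j n) / real (n+1) - (real (cnt \<beta> j (Suc n)) / real (n+1) - real (cnt \<alpha> j (Suc n)) / real (n+1))\<bar> \<le> (1 + real (length w)) / real (n+1)"
      by (simp add: abs_divide)
  qed
  then show ?thesis using ab unfolding huf_uconv by (intro exI[of _ "\<beta> - \<alpha>"]) auto
qed

definition rho :: "(nat \<Rightarrow> nat) \<Rightarrow> nat list \<Rightarrow> real" where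
  "rho u w = lim (\<lambda>n. real (occ_count u w 0 n) / real (n+1))"

lemma uconv_lim0: assumes "uconv f L" shows "(\<lambda>n. f 0 n) \<longlonglongrightarrow> L"
proof (rule LIMSEQ_I)
  fix r :: real assume "0 < r"
  then obtain N where "\<forall>n\<ge>N. \<forall>j. \<bar>f j n - L\<bar> < r" using assms unfolding uconv_def by blast
  then show "\<exists>no. \<forall>n\<ge>no. norm (f 0 n - L) < r" by auto
qed

lemma rho_eq: assumes "has_uniform_freq u w r" shows "rho u w = r"
  using uconv_lim0[OF assms[unfolded huf_uconv]] unfolding rho_def by (rule limI)

lemma uconv_nonneg: assumes "uconv f L" "\<And>j n. 0 \<le> f j n" shows "0 \<le> L"
  using LIMSEQ_le_const[OF uconv_lim0[OF assms(1)]] assms(2) by auto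

lemma occurs_at_snoc: "occurs_at (w @ [c]) u p \<longleftrightarrow> occurs_at w u p \<and> u (p + length w) = c"
  unfolding occurs_at_def
  by (auto simp: nth_append less_Suc_eq)

lemma occurs_at_Nil: "occurs_at [] u p" unfolding occurs_at_def by simp

lemma factor_Nil: "factor [] u" unfolding factor_def using occurs_at_Nil by blast

lemma occ_count_Nil: "occ_count u [] i n = n + 2"
proof -
  have "{p. i \<le> p \<and> p + length [] \<le> i + n + 1 \<and> occurs_at [] u p} = {i..i+n+1}"
    using occurs_at_Nil by auto
  then show ?thesis unfolding occ_count_def by simp
qed

lemma occ_count_nonfactor: assumes "\<not> factor w u" shows "occ_count u w i n = 0"
proof -
  have "{p. i \<le> p \<and> p + length w \<le> i + n + 1 \<and> occurs_at w u p} = {}"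
    using assms unfolding factor_def by blast
  then show ?thesis unfolding occ_count_def by (simp only: card.empty)
qed

context
  fixes u :: "nat \<Rightarrow> nat" and q :: nat
  assumes alph: "\<forall>n. u n < q"
    and fr: "\<forall>w. w \<noteq> [] \<and> factor w u \<longrightarrow> (\<exists>\<rho>. has_uniform_freq u w \<rho> \<and> \<rho> \<noteq> 0)"
begin

lemma huf_rho: "has_uniform_freq u w (rho u w)"
proof (cases "w = []")
  case True
  have "uconv (\<lambda>j n. real (occ_count u [] j n) / real (n+1)) 1"
  proof (rule uconv_close[OF uconv_const, where C = 1])
    fix j n
    have "real (occ_count u [] j n) / real (n+1) - 1 = 1 / real (n+1)"
      unfolding occ_count_Nil by (simp add: field_simps)
    then show "\<bar>real (occ_count u [] j n) / real (n+1) - 1\<bar> \<le> 1 / real (n+1)" by simp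
  qed
  then have "has_uniform_freq u [] 1" unfolding huf_uconv .
  then show ?thesis using True rho_eq by metis
next
  case False
  show ?thesis
  proof (cases "factor w u")
    case True
    then obtain r where "has_uniform_freq u w r" using fr False by blast
    then show ?thesis using rho_eq by metis
  next
    case nf: False
    have "has_uniform_freq u w 0" unfolding huf_uconv occ_count_nonfactor[OF nf]
      using uconv_const[of 0] by simp
    then show ?thesis using rho_eq by metis
  qed
qed

lemma rho_nonneg: "0 \<le> rho u w"
  using uconv_nonneg[OF huf_rho[unfolded huf_uconv]] by auto

lemma rho_Nil: "rho u [] = 1"
proof -
  have "uconv (\<lambda>j n. real (occ_count u [] j n) / real (n+1)) 1"
  proof (rule uconv_close[OF uconv_const, where C = 1])
    fix j n
    have "real (occ_count u [] j n) / real (n+1) - 1 = 1 / real (n+1)"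
      unfolding occ_count_Nil by (simp add: field_simps)
    then show "\<bar>real (occ_count u [] j n) / real (n+1) - 1\<bar> \<le> 1 / real (n+1)" by simp
  qed
  then show ?thesis unfolding huf_uconv[symmetric] by (rule rho_eq)
qed

lemma rho_pos: assumes "factor w u" shows "0 < rho u w"
proof (cases "w = []")
  case True then show ?thesis using rho_Nil by simp
next
  case False
  then obtain r where "has_uniform_freq u w r" "r \<noteq> 0" using fr assms by blast
  then show ?thesis using rho_eq rho_nonneg by (metis less_eq_real_def)
qed

lemma rho_zero: assumes "\<not> factor w u" shows "rho u w = 0"
proof -
  have "has_uniform_freq u w 0" unfolding huf_uconv occ_count_nonfactor[OF assms]
    using uconv_const[of 0] by simp
  then show ?thesis by (rule rho_eq)
qed

lemma occ_split:
  "(\<Sum>c<q. occ_count u (w @ [c]) j n) \<le> occ_count u w j n \<and>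
   occ_count u w j n \<le> (\<Sum>c<q. occ_count u (w @ [c]) j n) + 1"
proof -
  define S where "S c = {p. j \<le> p \<and> p + length (w @ [c]) \<le> j + n + 1 \<and> occurs_at (w @ [c]) u p}" for c
  define T where "T = {p. j \<le> p \<and> p + length w \<le> j + n + 1 \<and> occurs_at w u p}"
  have finS: "finite (S c)" for c unfolding S_def by (rule finite_subset[of _ "{..j+n+1}"]) auto
  have finT: "finite T" unfolding T_def by (rule finite_subset[of _ "{..j+n+1}"]) auto
  have disj: "\<forall>c\<in>{..<q}. \<forall>c'\<in>{..<q}. c \<noteq> c' \<longrightarrow> S c \<inter> S c' = {}"
    unfolding S_def occurs_at_snoc by auto
  have U: "(\<Union>c\<in>{..<q}. S c) = {p\<in>T. p + length w + 1 \<le> j + n + 1}"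
    unfolding S_def T_def occurs_at_snoc using alph by auto
  have sumS: "(\<Sum>c<q. card (S c)) = card (\<Union>c\<in>{..<q}. S c)"
    using card_UN_disjoint[of "{..<q}" S] finS disj by simp
  have "(\<Union>c\<in>{..<q}. S c) \<subseteq> T" unfolding U by auto
  then have l1: "card (\<Union>c\<in>{..<q}. S c) \<le> card T" using finT by (intro card_mono)
  have "T \<subseteq> (\<Union>c\<in>{..<q}. S c) \<union> {j + n + 1 - length w}" unfolding U unfolding T_def by auto
  then have "card T \<le> card ((\<Union>c\<in>{..<q}. S c) \<union> {j + n + 1 - length w})"
    using finS by (intro card_mono) auto
  also have "\<dots> \<le> card (\<Union>c\<in>{..<q}. S c) + 1" using card_Un_le[of "\<Union>c\<in>{..<q}. S c" "{j + n + 1 - length w}"] by simp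
  finally have l2: "card T \<le> card (\<Union>c\<in>{..<q}. S c) + 1" .
  have e: "occ_count u (w @ [c]) j n = card (S c)" "occ_count u w j n = card T" for c
    unfolding occ_count_def S_def T_def by auto
  show ?thesis unfolding e sumS using l1 l2 by simp
qed

lemma rho_add: "rho u w = (\<Sum>c<q. rho u (w @ [c]))"
proof -
  have U: "uconv (\<lambda>j n. \<Sum>c<q. real (occ_count u (w @ [c]) j n) / real (n+1)) (\<Sum>c<q. rho u (w @ [c]))"
    by (rule uconv_sum) (use huf_rho[unfolded huf_uconv] in auto)
  have "uconv (\<lambda>j n. real (occ_count u w j n) / real (n+1)) (\<Sum>c<q. rho u (w @ [c]))"
  proof (rule uconv_close[OF U, where C = 1])
    fix j n
    have s: "(\<Sum>c<q. real (occ_count u (w @ [c]) j n) / real (n+1)) = real (\<Sum>c<q. occ_count u (w @ [c]) j n) / real (n+1)"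
      by (simp add: sum_divide_distrib)
    have "\<bar>real (occ_count u w j n) - real (\<Sum>c<q. occ_count u (w @ [c]) j n)\<bar> \<le> 1"
      using occ_split[of w j n] by linarith
    then have "\<bar>real (occ_count u w j n) - real (\<Sum>c<q. occ_count u (w @ [c]) j n)\<bar> / real (n+1) \<le> 1 / real (n+1)"
      by (simp add: divide_right_mono)
    then show "\<bar>real (occ_count u w j n) / real (n+1) - (\<Sum>c<q. real (occ_count u (w @ [c]) j n) / real (n+1))\<bar> \<le> 1 / real (n+1)"
      unfolding s by (simp add: diff_divide_distrib[symmetric] abs_divide)
  qed
  then show ?thesis using huf_rho[unfolded huf_uconv] uconv_unique by blast
qed

end

definition pre :: "(nat \<Rightarrow> nat) \<Rightarrow> nat \<Rightarrow> nat \<Rightarrow> nat list" where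
  "pre u k m = map (\<lambda>i. u (k+i)) [0..<m]"

definition tm :: "(nat \<Rightarrow> nat) \<Rightarrow> nat \<Rightarrow> nat \<Rightarrow> real" where
  "tm u k m = (\<Sum>c<u (k+m). rho u (pre u k m @ [c]))"

definition up :: "(nat \<Rightarrow> nat) \<Rightarrow> nat \<Rightarrow> nat \<Rightarrow> nat \<Rightarrow> real" where
  "up u q k m = (\<Sum>c\<in>{u (k+m)<..<q}. rho u (pre u k m @ [c]))"

definition Aw :: "(nat \<Rightarrow> nat) \<Rightarrow> nat list \<Rightarrow> real" where
  "Aw u w = (\<Sum>m<length w. \<Sum>c<w ! m. rho u (take m w @ [c]))"

definition aa :: "(nat \<Rightarrow> nat) \<Rightarrow> nat \<Rightarrow> real" where
  "aa u k = suminf (tm u k)"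

lemma pre_Suc: "pre u k (Suc m) = pre u k m @ [u (k+m)]"
  unfolding pre_def by simp

lemma pre_length[simp]: "length (pre u k m) = m"
  unfolding pre_def by simp

lemma pre_nth: "i < m \<Longrightarrow> pre u k m ! i = u (k+i)"
  unfolding pre_def by simp

lemma pre_take: "m \<le> M \<Longrightarrow> take m (pre u k M) = pre u k m"
  unfolding pre_def by (simp add: take_map)

lemma pre_0[simp]: "pre u k 0 = []" unfolding pre_def by simp

lemma occurs_pre: "occurs_at w u p \<longleftrightarrow> pre u p (length w) = w"
proof
  assume "occurs_at w u p"
  then show "pre u p (length w) = w" by (simp add: list_eq_iff_nth_eq pre_nth occurs_at_def)
next
  assume h: "pre u p (length w) = w"
  show "occurs_at w u p" unfolding occurs_at_def
  proof (intro allI impI)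
    fix k assume "k < length w"
    then show "u (p+k) = w ! k" using pre_nth[of k "length w" u p] h by simp
  qed
qed

lemma factor_pre: "factor (pre u k m) u"
  unfolding factor_def using occurs_pre by (metis pre_length)

lemma Aw_pre: "Aw u (pre u k M) = (\<Sum>m<M. tm u k m)"
  unfolding Aw_def tm_def by (intro sum.cong) (auto simp: pre_take pre_nth)

lemma Aw_snoc: "Aw u (w @ [c]) = Aw u w + (\<Sum>c'<c. rho u (w @ [c']))"
proof -
  have "Aw u (w @ [c]) = (\<Sum>m<Suc (length w). \<Sum>c'<(w@[c]) ! m. rho u (take m (w@[c]) @ [c']))"
    unfolding Aw_def by simp
  also have "\<dots> = (\<Sum>m<length w. \<Sum>c'<(w@[c]) ! m. rho u (take m (w@[c]) @ [c'])) + (\<Sum>c'<c. rho u (w @ [c']))"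
    by simp
  also have "(\<Sum>m<length w. \<Sum>c'<(w@[c]) ! m. rho u (take m (w@[c]) @ [c'])) = Aw u w"
    unfolding Aw_def by (intro sum.cong) (auto simp: nth_append)
  finally show ?thesis .
qed

lemma Aw_Nil[simp]: "Aw u [] = 0" unfolding Aw_def by simp

context
  fixes u :: "nat \<Rightarrow> nat" and q :: nat
  assumes alph: "\<forall>n. u n < q"
    and fr: "\<forall>w. w \<noteq> [] \<and> factor w u \<longrightarrow> (\<exists>\<rho>. has_uniform_freq u w \<rho> \<and> \<rho> \<noteq> 0)"
begin

lemmas rnn = rho_nonneg[OF alph fr]
lemmas radd = rho_add[OF alph fr]

lemma tm_nonneg: "0 \<le> tm u k m" unfolding tm_def by (intro sum_nonneg rnn)
lemma up_nonneg: "0 \<le> up u q k m" unfolding up_def by (intro sum_nonneg rnn)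

lemma T1: "rho u (pre u k m) = tm u k m + rho u (pre u k (Suc m)) + up u q k m"
proof -
  define x where "x = u (k+m)"
  have xq: "x < q" using alph unfolding x_def by auto
  have "{..<q} = {..<x} \<union> {x} \<union> {x<..<q}" using xq by auto
  then have "(\<Sum>c<q. rho u (pre u k m @ [c])) =
     (\<Sum>c<x. rho u (pre u k m @ [c])) + rho u (pre u k m @ [x]) + (\<Sum>c\<in>{x<..<q}. rho u (pre u k m @ [c]))"
  proof -
    assume "{..<q} = {..<x} \<union> {x} \<union> {x<..<q}"
    moreover have "{..<x} \<inter> {x<..<q} = {}" by auto
    ultimately show ?thesis by (simp add: sum.union_disjoint)
  qed
  moreover have "rho u (pre u k m) = (\<Sum>c<q. rho u (pre u k m @ [c]))" by (rule radd)
  ultimately show ?thesis unfolding tm_def up_def pre_Suc x_def[symmetric] by linarith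
qed

lemma T2: "m0 \<le> N \<Longrightarrow> (\<Sum>m\<in>{m0..<N}. tm u k m + up u q k m) + rho u (pre u k N) = rho u (pre u k m0)"
proof (induction N)
  case 0 then show ?case by simp
next
  case (Suc N)
  show ?case
  proof (cases "m0 = Suc N")
    case True then show ?thesis by simp
  next
    case False
    then have "m0 \<le> N" using Suc by simp
    then show ?thesis using Suc.IH T1[of k N] by simp
  qed
qed

lemma summable_tm: "summable (tm u k)"
proof (rule summableI_nonneg_bounded[where x = 1])
  show "0 \<le> tm u k n" for n by (rule tm_nonneg)
  fix n
  have "(\<Sum>m\<in>{0..<n}. tm u k m + up u q k m) + rho u (pre u k n) = 1"
    using T2[of 0 n k] rho_Nil[OF alph fr] by simp
  moreover have "(\<Sum>i<n. tm u k i) \<le> (\<Sum>m\<in>{0..<n}. tm u k m + up u q k m)"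
    using up_nonneg by (simp add: atLeast0LessThan sum_mono)
  ultimately show "(\<Sum>i<n. tm u k i) \<le> 1" using rnn[of "pre u k n"] by linarith
qed

definition tail where "tail k M = (\<Sum>n. tm u k (n + M))"

lemma summable_tail: "summable (\<lambda>n. tm u k (n + M))"
  using summable_tm by (simp add: summable_iff_shift)

lemma aa_split: "aa u k = Aw u (pre u k M) + tail k M"
  unfolding aa_def tail_def Aw_pre using suminf_split_initial_segment[OF summable_tm, of k M] by simp

lemma tail_nonneg: "0 \<le> tail k M"
  unfolding tail_def by (rule suminf_nonneg[OF summable_tail tm_nonneg])

lemma tail_ge: "M \<le> m' \<Longrightarrow> tm u k m' \<le> tail k M"
proof -
  assume "M \<le> m'"
  have "sum (\<lambda>n. tm u k (n + M)) {m' - M} \<le> tail k M"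
    unfolding tail_def by (rule sum_le_suminf[OF summable_tail]) (auto simp: tm_nonneg)
  then show ?thesis using \<open>M \<le> m'\<close> by simp
qed

lemma tail_bound: "M \<le> m' \<Longrightarrow> tail k M + up u q k m' \<le> rho u (pre u k M)"
proof -
  assume mm: "M \<le> m'"
  have "tail k M \<le> rho u (pre u k M) - up u q k m'"
    unfolding tail_def
  proof (rule suminf_le_const[OF summable_tail])
    fix n
    define n' where "n' = max n (Suc (m' - M))"
    have "(\<Sum>i<n. tm u k (i + M)) \<le> (\<Sum>i<n'. tm u k (i + M))"
      unfolding n'_def by (rule sum_mono2) (auto simp: tm_nonneg)
    also have "(\<Sum>i<n'. tm u k (i + M)) = (\<Sum>m\<in>{M..<M+n'}. tm u k m)"
    proof -
      have "(\<Sum>m\<in>{M..<M+n'}. tm u k m) = (\<Sum>i\<in>{0..<n'}. tm u k (i + M))"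
        using sum.shift_bounds_nat_ivl[of "tm u k" 0 M n'] by (simp add: add.commute)
      then show ?thesis by (simp add: atLeast0LessThan)
    qed
    also have "\<dots> + up u q k m' \<le> (\<Sum>m\<in>{M..<M+n'}. tm u k m + up u q k m)"
    proof -
      have mi: "m' \<in> {M..<M+n'}" using mm unfolding n'_def by auto
      have "up u q k m' \<le> (\<Sum>m\<in>{M..<M+n'}. up u q k m)"
        using member_le_sum[OF mi, of "up u q k"] up_nonneg by auto
      then show ?thesis by (simp add: sum.distrib)
    qed
    also have "\<dots> \<le> rho u (pre u k M)"
      using T2[of M "M+n'" k] rnn[of "pre u k (M+n')"] by simp
    finally show "(\<Sum>i<n. tm u k (i + M)) \<le> rho u (pre u k M) - up u q k m'" by linarith
  qed
  then show ?thesis by simp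
qed

lemma aa_bounds: "Aw u (pre u k M) \<le> aa u k \<and> aa u k \<le> Aw u (pre u k M) + rho u (pre u k M)"
  using aa_split[of k M] tail_nonneg[of k M] tail_bound[of M M k] up_nonneg[of k M] by linarith

lemma aa_01: "0 \<le> aa u k \<and> aa u k \<le> 1"
  using aa_bounds[of k 0] rho_Nil[OF alph fr] by simp

end

lemma ap_diff: assumes "aperiodic u" "k \<noteq> b" shows "\<exists>p. u (k+p) \<noteq> u (b+p)"
proof (rule ccontr)
  assume "\<not> ?thesis"
  then have eq: "\<And>p. u (k+p) = u (b+p)" by auto
  show False
  proof (cases "b < k")
    case True
    have "\<forall>n\<ge>b. u (n + (k-b)) = u n"
    proof (intro allI impI)
      fix n assume "b \<le> n"
      then have "n + (k-b) = k + (n-b)" "n = b + (n-b)" using True by auto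
      then show "u (n + (k-b)) = u n" using eq[of "n-b"] by metis
    qed
    then show False using assms(1) True unfolding aperiodic_def by (metis zero_less_diff)
  next
    case False
    then have kb: "k < b" using assms(2) by auto
    have "\<forall>n\<ge>k. u (n + (b-k)) = u n"
    proof (intro allI impI)
      fix n assume "k \<le> n"
      then have "n + (b-k) = b + (n-k)" "n = k + (n-k)" using kb by auto
      then show "u (n + (b-k)) = u n" using eq[of "n-k"] by metis
    qed
    then show False using assms(1) kb unfolding aperiodic_def by (metis zero_less_diff)
  qed
qed

lemma first_diff: assumes "aperiodic u" "k \<noteq> b"
  shows "\<exists>p. (\<forall>s<p. u (k+s) = u (b+s)) \<and> u (k+p) \<noteq> u (b+p)"
proof -
  have ex: "\<exists>p. u (k+p) \<noteq> u (b+p)" by (rule ap_diff[OF assms])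
  define p where "p = (LEAST p. u (k+p) \<noteq> u (b+p))"
  have "u (k+p) \<noteq> u (b+p)" unfolding p_def by (rule LeastI_ex[OF ex])
  moreover have "\<forall>s<p. u (k+s) = u (b+s)" unfolding p_def using not_less_Least by blast
  ultimately show ?thesis by blast
qed

lemma pre_eq: "(\<forall>s<p. u (k+s) = u (b+s)) \<Longrightarrow> pre u k p = pre u b p"
  unfolding pre_def by simp

lemma factor_ext: assumes "\<forall>s<p. u (k+s) = u (b+s)" shows "factor (pre u b p @ [u (k+p)]) u"
proof -
  have "pre u k (Suc p) = pre u b p @ [u (k+p)]" using pre_Suc pre_eq[OF assms] by metis
  then have "occurs_at (pre u b p @ [u (k+p)]) u k" unfolding occurs_pre by (metis pre_length)
  then show ?thesis unfolding factor_def by blast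
qed

lemma occ_le_diff: assumes "occurs_at (pre u b L) u k" "u (k+p) \<noteq> u (b+p)" shows "L \<le> p"
proof (rule ccontr)
  assume "\<not> L \<le> p"
  then have "p < L" by simp
  then have "u (k+p) = pre u b L ! p" using assms(1) unfolding occurs_at_def by simp
  also have "\<dots> = u (b+p)" using \<open>p < L\<close> by (simp add: pre_nth)
  finally show False using assms(2) by simp
qed

lemma factor_letter: assumes "factor (w @ [c]) u" "\<forall>n. u n < q" shows "c < q"
  using assms unfolding factor_def occurs_at_snoc by auto

lemma inf_other: assumes "infinite S" obtains k where "k \<in> S" "k \<noteq> i"
proof -
  have "infinite (S - {i})" using assms by simp
  then obtain k where "k \<in> S - {i}" by (metis finite.emptyI ex_in_conv)
  then show ?thesis using that by auto
qed

context
  fixes u :: "nat \<Rightarrow> nat" and q :: nat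
  assumes alph: "\<forall>n. u n < q"
    and rec: "recurrent u"
    and ap: "aperiodic u"
begin

lemma gap:
  assumes eqm: "\<forall>m'<m. u (i+m') = u (j+m')" and lt: "u (i+m) < u (j+m)"
  shows "\<exists>m'>m. (\<exists>c. u (i+m') < c \<and> factor (pre u i m' @ [c]) u) \<or> (\<exists>c. c < u (j+m') \<and> factor (pre u j m' @ [c]) u)"
proof -
  have "i \<noteq> j" using lt by auto
  then consider "i < j" | "j < i" by linarith
  then show ?thesis
  proof cases
    case 1
    define d where "d = j - i"
    have jd: "j = i + d" using 1 unfolding d_def by simp
    have "infinite {k. occurs_at (pre u i (d+m+2)) u k}" using rec factor_pre unfolding recurrent_def by blast
    then obtain k where k: "occurs_at (pre u i (d+m+2)) u k" "k \<noteq> i" by (rule inf_other) auto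
    obtain p where p: "\<forall>s<p. u (k+s) = u (i+s)" "u (k+p) \<noteq> u (i+p)" using first_diff[OF ap k(2)] by blast
    have pL: "d+m+2 \<le> p" using occ_le_diff[OF k(1) p(2)] .
    show ?thesis
    proof (cases "u (i+p) < u (k+p)")
      case True
      then show ?thesis using factor_ext[OF p(1)] pL by (intro exI[of _ p]) auto
    next
      case False
      then have lt2: "u (k+p) < u (i+p)" using p(2) by simp
      define m' where "m' = p - d"
      have pm: "p = d + m'" using pL unfolding m'_def by simp
      have e1: "\<forall>s<m'. u ((k+d)+s) = u (j+s)"
      proof (intro allI impI)
        fix s assume "s < m'"
        then have "d + s < p" using pm by simp
        then have "u (k + (d+s)) = u (i + (d+s))" using p(1) by blast
        then show "u ((k+d)+s) = u (j+s)" unfolding jd by (simp add: add.assoc)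
      qed
      have "factor (pre u j m' @ [u ((k+d)+m')]) u" by (rule factor_ext[OF e1])
      moreover have "u ((k+d)+m') < u (j+m')" using lt2 unfolding pm jd by (simp add: add.assoc)
      moreover have "m < m'" using pL pm by simp
      ultimately show ?thesis by blast
    qed
  next
    case 2
    define d where "d = i - j"
    have id: "i = j + d" using 2 unfolding d_def by simp
    have "infinite {k. occurs_at (pre u j (d+m+2)) u k}" using rec factor_pre unfolding recurrent_def by blast
    then obtain k where k: "occurs_at (pre u j (d+m+2)) u k" "k \<noteq> j" by (rule inf_other) auto
    obtain p where p: "\<forall>s<p. u (k+s) = u (j+s)" "u (k+p) \<noteq> u (j+p)" using first_diff[OF ap k(2)] by blast
    have pL: "d+m+2 \<le> p" using occ_le_diff[OF k(1) p(2)] .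
    show ?thesis
    proof (cases "u (k+p) < u (j+p)")
      case True
      then show ?thesis using factor_ext[OF p(1)] pL by (intro exI[of _ p]) auto
    next
      case False
      then have lt2: "u (j+p) < u (k+p)" using p(2) by simp
      define m' where "m' = p - d"
      have pm: "p = d + m'" using pL unfolding m'_def by simp
      have e1: "\<forall>s<m'. u ((k+d)+s) = u (i+s)"
      proof (intro allI impI)
        fix s assume "s < m'"
        then have "d + s < p" using pm by simp
        then have "u (k + (d+s)) = u (j + (d+s))" using p(1) by blast
        then show "u ((k+d)+s) = u (i+s)" unfolding id by (simp add: add.assoc)
      qed
      have "factor (pre u i m' @ [u ((k+d)+m')]) u" by (rule factor_ext[OF e1])
      moreover have "u (i+m') < u ((k+d)+m')" using lt2 unfolding pm id by (simp add: add.assoc)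
      moreover have "m < m'" using pL pm by simp
      ultimately show ?thesis by blast
    qed
  qed
qed

end

context
  fixes u :: "nat \<Rightarrow> nat" and q :: nat
  assumes alph: "\<forall>n. u n < q"
    and rec: "recurrent u"
    and ap: "aperiodic u"
    and fr: "\<forall>w. w \<noteq> [] \<and> factor w u \<longrightarrow> (\<exists>\<rho>. has_uniform_freq u w \<rho> \<and> \<rho> \<noteq> 0)"
begin

lemma aa_mono:
  assumes "lex_less (shift i u) (shift j u)"
  shows "aa u i < aa u j"
proof -
  obtain m where eqm: "\<forall>m'<m. u (i+m') = u (j+m')" and lt: "u (i+m) < u (j+m)"
    using assms unfolding lex_less_def shift_def by auto
  have pe: "pre u i m' = pre u j m'" if "m' \<le> m" for m'
    using pre_eq[of m' u i j] eqm that by auto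
  have tme: "tm u i m' = tm u j m'" if "m' < m" for m'
    unfolding tm_def using pe[of m'] eqm that by auto
  have Ae: "Aw u (pre u i m) = Aw u (pre u j m)"
    unfolding Aw_pre using tme by (intro sum.cong) auto
  have ai: "aa u i = Aw u (pre u i m) + tm u i m + tail u i (Suc m)"
    using aa_split[OF alph fr, of i "Suc m"] unfolding Aw_pre by simp
  have aj: "aa u j = Aw u (pre u j m) + tm u j m + tail u j (Suc m)"
    using aa_split[OF alph fr, of j "Suc m"] unfolding Aw_pre by simp
  have tmj: "tm u i m + rho u (pre u i (Suc m)) \<le> tm u j m"
  proof -
    have "tm u i m + rho u (pre u i (Suc m)) = (\<Sum>c<Suc (u (i+m)). rho u (pre u j m @ [c]))"
      unfolding tm_def pre_Suc pe[OF order_refl] by simp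
    also have "\<dots> \<le> (\<Sum>c<u (j+m). rho u (pre u j m @ [c]))"
      using lt by (intro sum_mono2) (auto simp: rho_nonneg[OF alph fr])
    finally show ?thesis unfolding tm_def .
  qed
  obtain m' where m': "m < m'" and cs: "(\<exists>c. u (i+m') < c \<and> factor (pre u i m' @ [c]) u) \<or> (\<exists>c. c < u (j+m') \<and> factor (pre u j m' @ [c]) u)"
    using gap[OF alph rec ap eqm lt] by blast
  have tb: "tail u i (Suc m) + up u q i m' \<le> rho u (pre u i (Suc m))"
    using tail_bound[OF alph fr, of "Suc m" m' i] m' by simp
  have tg: "tm u j m' \<le> tail u j (Suc m)"
    using tail_ge[OF alph fr, of "Suc m" m' j] m' by simp
  have pos: "0 < up u q i m' + tm u j m'"
    using cs
  proof
    assume "\<exists>c. u (i+m') < c \<and> factor (pre u i m' @ [c]) u"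
    then obtain c where c: "u (i+m') < c" "factor (pre u i m' @ [c]) u" by blast
    have "c < q" using factor_letter[OF c(2) alph] .
    then have "0 < up u q i m'" unfolding up_def
      using c rho_pos[OF alph fr c(2)] by (intro sum_pos2[where i = c]) (auto simp: rho_nonneg[OF alph fr])
    then show ?thesis using tm_nonneg[OF alph fr] by (smt (verit))
  next
    assume "\<exists>c. c < u (j+m') \<and> factor (pre u j m' @ [c]) u"
    then obtain c where c: "c < u (j+m')" "factor (pre u j m' @ [c]) u" by blast
    then have "0 < tm u j m'" unfolding tm_def
      using c rho_pos[OF alph fr c(2)] by (intro sum_pos2[where i = c]) (auto simp: rho_nonneg[OF alph fr])
    then show ?thesis using up_nonneg[OF alph fr] by (smt (verit))
  qed
  show ?thesis using ai aj Ae tmj tb tg pos by linarith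
qed

lemma aa_iff: "aa u i < aa u j \<longleftrightarrow> valid_perm u i j"
  unfolding valid_perm_def
proof
  assume "aa u i < aa u j"
  then have "i \<noteq> j" by auto
  then have "shift i u \<noteq> shift j u" using ap_diff[OF ap] unfolding shift_def by metis
  then have "lex_less (shift i u) (shift j u) \<or> lex_less (shift j u) (shift i u)" by (rule lex_total)
  then show "lex_less (shift i u) (shift j u)" using aa_mono \<open>aa u i < aa u j\<close> by fastforce
qed (rule aa_mono)

lemma aa_inj: "inj (aa u)"
proof (rule injI)
  fix i j assume e: "aa u i = aa u j"
  show "i = j"
  proof (rule ccontr)
    assume "i \<noteq> j"
    then have "shift i u \<noteq> shift j u" using ap_diff[OF ap] unfolding shift_def by metis
    then have "lex_less (shift i u) (shift j u) \<or> lex_less (shift j u) (shift i u)" by (rule lex_total)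
    then show False using aa_mono e by fastforce
  qed
qed

end

lemma card_gap:
  fixes S :: "nat set" and D n :: nat
  assumes sub: "S \<subseteq> {..n}" and gap: "\<And>x y. x \<in> S \<Longrightarrow> y \<in> S \<Longrightarrow> x < y \<Longrightarrow> D < y - x"
  shows "card S \<le> n div (Suc D) + 1"
proof -
  have inj: "inj_on (\<lambda>x. x div Suc D) S"
  proof (rule inj_onI)
    fix x y assume xy: "x \<in> S" "y \<in> S" "x div Suc D = y div Suc D"
    show "x = y"
    proof (rule ccontr)
      assume "x \<noteq> y"
      then consider "x < y" | "y < x" by linarith
      then show False
      proof cases
        case 1
        have "y - x \<le> D"
        proof -
          have "x = x div Suc D * Suc D + x mod Suc D" by (rule div_mult_mod_eq[symmetric])
          moreover have "y = y div Suc D * Suc D + y mod Suc D" by (rule div_mult_mod_eq[symmetric])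
          moreover have "x mod Suc D < Suc D" "y mod Suc D < Suc D" by auto
          moreover have "x div Suc D * Suc D = y div Suc D * Suc D" using xy(3) by simp
          ultimately show ?thesis using 1 by linarith
        qed
        then show False using gap[OF xy(1) xy(2) 1] by simp
      next
        case 2
        have "x - y \<le> D"
        proof -
          have "x = x div Suc D * Suc D + x mod Suc D" by (rule div_mult_mod_eq[symmetric])
          moreover have "y = y div Suc D * Suc D + y mod Suc D" by (rule div_mult_mod_eq[symmetric])
          moreover have "x mod Suc D < Suc D" "y mod Suc D < Suc D" by auto
          moreover have "x div Suc D * Suc D = y div Suc D * Suc D" using xy(3) by simp
          ultimately show ?thesis using 2 by linarith
        qed
        then show False using gap[OF xy(2) xy(1) 2] by simp
      qed
    qed
  qed
  have "(\<lambda>x. x div Suc D) ` S \<subseteq> {..n div Suc D}" using sub by (auto intro: div_le_mono)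
  then have "card ((\<lambda>x. x div Suc D) ` S) \<le> n div Suc D + 1"
    using card_mono[of "{..n div Suc D}"] by fastforce
  then show ?thesis using card_image[OF inj] by simp
qed

context
  fixes u :: "nat \<Rightarrow> nat" and q :: nat
  assumes alph: "\<forall>n. u n < q"
    and rec: "recurrent u"
    and ap: "aperiodic u"
    and fr: "\<forall>w. w \<noteq> [] \<and> factor w u \<longrightarrow> (\<exists>\<rho>. has_uniform_freq u w \<rho> \<and> \<rho> \<noteq> 0)"
begin

lemma break_window: assumes "0 < d"
  shows "\<exists>N. \<forall>i. \<exists>p. i \<le> p \<and> p + d \<le> i + N \<and> u (p+d) \<noteq> u p"
proof -
  obtain b where b: "u (b+d) \<noteq> u b"
    using ap assms unfolding aperiodic_def by (metis le0)
  define w0 where "w0 = pre u b (Suc d)"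
  have pos: "0 < rho u w0" unfolding w0_def by (rule rho_pos[OF alph fr factor_pre])
  obtain N where N: "\<forall>n\<ge>N. \<forall>i. \<bar>real (occ_count u w0 i n) / real (n+1) - rho u w0\<bar> < rho u w0"
    using huf_rho[OF alph fr, of w0] pos unfolding has_uniform_freq_def by blast
  have "\<forall>i. \<exists>p. i \<le> p \<and> p + d \<le> i + N \<and> u (p+d) \<noteq> u p"
  proof (intro allI)
    fix i
    have "\<bar>real (occ_count u w0 i N) / real (N+1) - rho u w0\<bar> < rho u w0" using N by blast
    then have "0 < real (occ_count u w0 i N) / real (N+1)" by linarith
    then have "occ_count u w0 i N \<noteq> 0" by (cases "occ_count u w0 i N = 0") auto
    then have "{p. i \<le> p \<and> p + length w0 \<le> i + N + 1 \<and> occurs_at w0 u p} \<noteq> {}"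
      unfolding occ_count_def by (metis card.empty)
    then obtain p where p: "i \<le> p" "p + length w0 \<le> i + N + 1" "occurs_at w0 u p" by blast
    have "u (p+0) = w0 ! 0" "u (p+d) = w0 ! d" using p(3) unfolding occurs_at_def w0_def by auto
    then have "u p = u b" "u (p+d) = u (b+d)" unfolding w0_def by (auto simp: pre_nth)
    then show "\<exists>p. i \<le> p \<and> p + d \<le> i + N \<and> u (p+d) \<noteq> u p" using p b unfolding w0_def by auto
  qed
  then show ?thesis by blast
qed

lemma rho_small: assumes "0 < \<epsilon>" shows "\<exists>M0. \<forall>M\<ge>M0. \<forall>w. length w = M \<longrightarrow> rho u w < \<epsilon>"
proof -
  obtain D0 :: nat where D0: "0 < D0" "inverse (real D0) < \<epsilon>" using ex_inverse_of_nat_less[OF assms] by blast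
  define D where "D = D0"
  have "\<forall>d. \<exists>N. 0 < d \<longrightarrow> (\<forall>i. \<exists>p. i \<le> p \<and> p + d \<le> i + N \<and> u (p+d) \<noteq> u p)"
    using break_window by blast
  then obtain Nf where Nf: "\<And>d. 0 < d \<Longrightarrow> \<forall>i. \<exists>p. i \<le> p \<and> p + d \<le> i + Nf d \<and> u (p+d) \<noteq> u p"
    by metis
  define L where "L = (\<Sum>d\<in>{1..D}. Nf d)"
  have NL: "Nf d \<le> L" if "d \<in> {1..D}" for d
    unfolding L_def using that by (intro member_le_sum) auto
  show ?thesis
  proof (intro exI allI impI)
    fix M :: nat and w :: "nat list" assume M: "Suc L \<le> M" and lw: "length w = M"
    have sep: "D < y - x" if xy: "occurs_at w u x" "occurs_at w u y" "x < y" for x y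
    proof (rule ccontr)
      assume "\<not> D < y - x"
      define d where "d = y - x"
      have d: "d \<in> {1..D}" using \<open>\<not> D < y - x\<close> xy(3) unfolding d_def by auto
      then obtain p where p: "x \<le> p" "p + d \<le> x + Nf d" "u (p+d) \<noteq> u p" using Nf[of d] by auto
      define s where "s = p - x"
      have sM: "s < M" using p NL[OF d] M d unfolding s_def by auto
      have "u (x+s) = w ! s" "u (y+s) = w ! s" using xy sM lw unfolding occurs_at_def by auto
      moreover have "x + s = p" "y + s = p + d" using p xy(3) unfolding s_def d_def by auto
      ultimately show False using p(3) by simp
    qed
    have bnd: "real (occ_count u w 0 n) / real (n+1) \<le> inverse (real (Suc D)) + inverse (real (Suc n))" for n
    proof -
      define S where "S = {p. 0 \<le> p \<and> p + length w \<le> 0 + n + 1 \<and> occurs_at w u p}"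
      have "S \<subseteq> {..n}" unfolding S_def using lw M by auto
      moreover have "\<And>x y. x \<in> S \<Longrightarrow> y \<in> S \<Longrightarrow> x < y \<Longrightarrow> D < y - x" unfolding S_def using sep by auto
      ultimately have c: "card S \<le> n div Suc D + 1" by (rule card_gap)
      have "real (occ_count u w 0 n) \<le> real (n div Suc D) + 1" using c unfolding occ_count_def S_def by simp
      also have "\<dots> \<le> real n / real (Suc D) + 1" using of_nat_div_le_of_nat[of n "Suc D"] by simp
      finally have "real (occ_count u w 0 n) / real (n+1) \<le> (real n / real (Suc D) + 1) / real (n+1)"
        by (simp add: divide_right_mono)
      also have "\<dots> = real n / real (Suc D) / real (n+1) + inverse (real (Suc n))"
        by (simp add: add_divide_distrib divide_inverse distrib_right)
      also have "real n / real (Suc D) / real (n+1) \<le> inverse (real (Suc D))"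
      proof -
        have "real n / real (n+1) \<le> 1" by simp
        then have "(real n / real (n+1)) * inverse (real (Suc D)) \<le> 1 * inverse (real (Suc D))"
          by (intro mult_right_mono) auto
        moreover have "real n / real (Suc D) / real (n+1) = (real n / real (n+1)) * inverse (real (Suc D))"
          by (simp add: divide_inverse)
        ultimately show ?thesis by simp
      qed
      finally show ?thesis by simp
    qed
    have lim1: "(\<lambda>n. real (occ_count u w 0 n) / real (n+1)) \<longlonglongrightarrow> rho u w"
      using uconv_lim0[OF huf_rho[OF alph fr, unfolded huf_uconv]] .
    have "rho u w \<le> inverse (real (Suc D))"
      by (rule LIMSEQ_le[OF lim1 LIMSEQ_inverse_real_of_nat_add]) (use bnd in auto)
    also have "\<dots> < \<epsilon>" using D0 unfolding D_def
      by (meson inverse_less_iff_less le_less_trans lessI of_nat_0_less_iff of_nat_less_iff order.strict_trans zero_less_Suc)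
    finally show "rho u w < \<epsilon>" .
  qed
qed

end

definition BB :: "nat \<Rightarrow> nat \<Rightarrow> nat list set" where
  "BB q M = {w. set w \<subseteq> {..<q} \<and> length w = M}"

definition clamp :: "real \<Rightarrow> real \<Rightarrow> real" where
  "clamp x r = min r (max 0 x)"

lemma finite_BB: "finite (BB q M)"
  unfolding BB_def by (rule finite_lists_length_eq) auto

lemma BB_0: "BB q 0 = {[]}" unfolding BB_def by auto

lemma BB_Suc: "BB q (Suc M) = (\<lambda>(w,c). w @ [c]) ` (BB q M \<times> {..<q})"
proof
  show "BB q (Suc M) \<subseteq> (\<lambda>(w,c). w @ [c]) ` (BB q M \<times> {..<q})"
  proof
    fix x assume x: "x \<in> BB q (Suc M)"
    then have "x \<noteq> []" unfolding BB_def by auto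
    then obtain v c where vc: "x = v @ [c]" by (metis rev_exhaust)
    then have "(v, c) \<in> BB q M \<times> {..<q}" using x unfolding BB_def by auto
    then show "x \<in> (\<lambda>(w,c). w @ [c]) ` (BB q M \<times> {..<q})" using vc by force
  qed
  show "(\<lambda>(w,c). w @ [c]) ` (BB q M \<times> {..<q}) \<subseteq> BB q (Suc M)"
    unfolding BB_def by auto
qed

lemma inj_snoc: "inj_on (\<lambda>(w,c). w @ [c]) X"
  by (rule inj_onI) auto

lemma clamp_nonneg: "0 \<le> r \<Longrightarrow> 0 \<le> clamp x r" unfolding clamp_def by auto
lemma clamp_le: "0 \<le> r \<Longrightarrow> clamp x r \<le> r" unfolding clamp_def by auto

lemma clamp_add: "0 \<le> R \<Longrightarrow> 0 \<le> r \<Longrightarrow> clamp x R + clamp (x - R) r = clamp x (R + r)"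
  unfolding clamp_def by (auto simp: min_def max_def)

lemma clamp_sum:
  fixes f :: "nat \<Rightarrow> real" and n :: nat
  assumes "\<And>c. 0 \<le> f c"
  shows "(\<Sum>c<n. clamp (x - (\<Sum>c'<c. f c')) (f c)) = clamp x (\<Sum>c<n. f c)"
proof (induction n)
  case 0 then show ?case unfolding clamp_def by simp
next
  case (Suc n)
  have "(\<Sum>c<Suc n. clamp (x - (\<Sum>c'<c. f c')) (f c)) = clamp x (\<Sum>c<n. f c) + clamp (x - (\<Sum>c'<n. f c')) (f n)"
    using Suc by simp
  also have "\<dots> = clamp x ((\<Sum>c<n. f c) + f n)" by (rule clamp_add) (auto intro: sum_nonneg assms)
  finally show ?case by simp
qed

context
  fixes u :: "nat \<Rightarrow> nat" and q :: nat
  assumes alph: "\<forall>n. u n < q"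
    and fr: "\<forall>w. w \<noteq> [] \<and> factor w u \<longrightarrow> (\<exists>\<rho>. has_uniform_freq u w \<rho> \<and> \<rho> \<noteq> 0)"
begin

lemmas rnn' = rho_nonneg[OF alph fr]

lemma Aw_nonneg: "0 \<le> Aw u w"
  unfolding Aw_def by (intro sum_nonneg rnn')

lemma I1: "(\<Sum>w\<in>BB q M. clamp (t - Aw u w) (rho u w)) = clamp t 1"
proof (induction M)
  case 0 then show ?case unfolding BB_0 using rho_Nil[OF alph fr] by simp
next
  case (Suc M)
  have "(\<Sum>w\<in>BB q (Suc M). clamp (t - Aw u w) (rho u w)) =
        (\<Sum>x\<in>BB q M \<times> {..<q}. clamp (t - Aw u (fst x @ [snd x])) (rho u (fst x @ [snd x])))"
    unfolding BB_Suc by (subst sum.reindex[OF inj_snoc]) (simp add: case_prod_beta)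
  also have "\<dots> = (\<Sum>w\<in>BB q M. \<Sum>c<q. clamp (t - Aw u (w @ [c])) (rho u (w @ [c])))"
    by (subst sum.cartesian_product) (simp add: case_prod_beta)
  also have "\<dots> = (\<Sum>w\<in>BB q M. clamp (t - Aw u w) (rho u w))"
  proof (rule sum.cong[OF refl])
    fix w
    have "(\<Sum>c<q. clamp (t - Aw u (w @ [c])) (rho u (w @ [c]))) =
          (\<Sum>c<q. clamp ((t - Aw u w) - (\<Sum>c'<c. rho u (w @ [c']))) (rho u (w @ [c])))"
      unfolding Aw_snoc by (simp add: algebra_simps)
    also have "\<dots> = clamp (t - Aw u w) (\<Sum>c<q. rho u (w @ [c]))"
      by (rule clamp_sum) (rule rnn')
    also have "\<dots> = clamp (t - Aw u w) (rho u w)" using rho_add[OF alph fr, of w] by simp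
    finally show "(\<Sum>c<q. clamp (t - Aw u (w @ [c])) (rho u (w @ [c]))) = clamp (t - Aw u w) (rho u w)" .
  qed
  finally show ?case using Suc by simp
qed

lemma snoc_in: "c < q \<Longrightarrow> Aw u w \<le> Aw u (w @ [c]) \<and> Aw u (w @ [c]) + rho u (w @ [c]) \<le> Aw u w + rho u w"
proof -
  assume c: "c < q"
  have "Aw u w \<le> Aw u (w @ [c])" unfolding Aw_snoc by (simp add: sum_nonneg rnn')
  moreover have "Aw u (w @ [c]) + rho u (w @ [c]) = Aw u w + (\<Sum>c'<Suc c. rho u (w @ [c']))"
    unfolding Aw_snoc by simp
  moreover have "(\<Sum>c'<Suc c. rho u (w @ [c'])) \<le> (\<Sum>c'<q. rho u (w @ [c']))"
    using c by (intro sum_mono2) (auto simp: rnn')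
  moreover have "rho u w = (\<Sum>c'<q. rho u (w @ [c']))" by (rule rho_add[OF alph fr])
  ultimately show ?thesis by linarith
qed

lemma snoc_lt: "c < c' \<Longrightarrow> Aw u (w @ [c]) + rho u (w @ [c]) \<le> Aw u (w @ [c'])"
proof -
  assume c: "c < c'"
  have "Aw u (w @ [c]) + rho u (w @ [c]) = Aw u w + (\<Sum>c''<Suc c. rho u (w @ [c'']))"
    unfolding Aw_snoc by simp
  moreover have "(\<Sum>c''<Suc c. rho u (w @ [c''])) \<le> (\<Sum>c''<c'. rho u (w @ [c'']))"
    using c by (intro sum_mono2) (auto simp: rnn')
  ultimately show ?thesis unfolding Aw_snoc by linarith
qed

lemma I2: "w \<in> BB q M \<Longrightarrow> w' \<in> BB q M \<Longrightarrow> w \<noteq> w' \<Longrightarrow>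
   Aw u w + rho u w \<le> Aw u w' \<or> Aw u w' + rho u w' \<le> Aw u w"
proof (induction M arbitrary: w w')
  case 0 then show ?case unfolding BB_0 by simp
next
  case (Suc M)
  obtain v c where v: "w = v @ [c]" "v \<in> BB q M" "c < q" using Suc.prems(1) unfolding BB_Suc by auto
  obtain v' c' where v': "w' = v' @ [c']" "v' \<in> BB q M" "c' < q" using Suc.prems(2) unfolding BB_Suc by auto
  show ?case
  proof (cases "v = v'")
    case True
    then have "c \<noteq> c'" using Suc.prems(3) v v' by auto
    then consider "c < c'" | "c' < c" by linarith
    then show ?thesis using snoc_lt v v' True by cases auto
  next
    case False
    from Suc.IH[OF v(2) v'(2) False]
    show ?thesis using snoc_in[OF v(3), of v] snoc_in[OF v'(3), of v'] v v' by auto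
  qed
qed

end

lemma sum_card_le1:
  fixes f :: "'a \<Rightarrow> real"
  assumes "finite X" "card X \<le> 1" "\<And>x. x \<in> X \<Longrightarrow> f x \<le> \<mu>" "0 \<le> \<mu>"
  shows "sum f X \<le> \<mu>"
proof -
  have "sum f X \<le> real (card X) * \<mu>" using sum_bounded_above[of X f \<mu>] assms(3) by auto
  also have "\<dots> \<le> 1 * \<mu>" using assms(2,4) by (intro mult_right_mono) auto
  finally show ?thesis by simp
qed

context
  fixes u :: "nat \<Rightarrow> nat" and q :: nat
  assumes alph: "\<forall>n. u n < q"
    and fr: "\<forall>w. w \<noteq> [] \<and> factor w u \<longrightarrow> (\<exists>\<rho>. has_uniform_freq u w \<rho> \<and> \<rho> \<noteq> 0)"
begin

lemmas rnn2 = rho_nonneg[OF alph fr]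

lemma S2_card: "card {w\<in>BB q M. Aw u w < t \<and> t \<le> Aw u w + rho u w} \<le> 1"
proof -
  have "\<forall>x\<in>{w\<in>BB q M. Aw u w < t \<and> t \<le> Aw u w + rho u w}. \<forall>y\<in>{w\<in>BB q M. Aw u w < t \<and> t \<le> Aw u w + rho u w}. x = y"
  proof (intro ballI)
    fix x y assume x: "x \<in> {w\<in>BB q M. Aw u w < t \<and> t \<le> Aw u w + rho u w}" and y: "y \<in> {w\<in>BB q M. Aw u w < t \<and> t \<le> Aw u w + rho u w}"
    show "x = y"
    proof (rule ccontr)
      assume "x \<noteq> y"
      moreover have "x \<in> BB q M" "y \<in> BB q M" using x y by auto
      ultimately have "Aw u x + rho u x \<le> Aw u y \<or> Aw u y + rho u y \<le> Aw u x" using I2[OF alph fr] by blast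
      then show False using x y by auto
    qed
  qed
  then show ?thesis using card_le_Suc0_iff_eq[of "{w\<in>BB q M. Aw u w < t \<and> t \<le> Aw u w + rho u w}"] finite_BB by auto
qed

lemma upper_sum:
  assumes t: "0 \<le> t" "t \<le> 1" and mu: "\<And>w. w \<in> BB q M \<Longrightarrow> rho u w \<le> \<mu>" "0 \<le> \<mu>"
  shows "(\<Sum>w\<in>{w\<in>BB q M. Aw u w < t}. rho u w) \<le> t + \<mu>"
proof -
  define P where "P = {w\<in>BB q M. Aw u w < t}"
  define S where "S = {w\<in>BB q M. Aw u w < t \<and> t \<le> Aw u w + rho u w}"
  define g where "g w = clamp (t - Aw u w) (rho u w)" for w
  have finP: "finite P" unfolding P_def using finite_BB by auto
  have "(\<Sum>w\<in>P. g w) \<le> (\<Sum>w\<in>BB q M. g w)"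
    unfolding g_def P_def using finite_BB by (intro sum_mono2) (auto intro: clamp_nonneg rnn2)
  also have "\<dots> = t" unfolding g_def I1[OF alph fr] using t unfolding clamp_def by simp
  finally have a: "(\<Sum>w\<in>P. g w) \<le> t" .
  have "(\<Sum>w\<in>P. rho u w - g w) = (\<Sum>w\<in>P \<inter> S. rho u w - g w)"
  proof (rule sum.mono_neutral_right[OF finP])
    show "P \<inter> S \<subseteq> P" by auto
    show "\<forall>i\<in>P - P \<inter> S. rho u i - g i = 0"
    proof
      fix w assume "w \<in> P - P \<inter> S"
      then have "Aw u w + rho u w < t" unfolding P_def S_def by auto
      then show "rho u w - g w = 0" unfolding g_def clamp_def using rnn2[of w] by auto
    qed
  qed
  also have "\<dots> \<le> \<mu>"
  proof (rule sum_card_le1)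
    show "finite (P \<inter> S)" using finP by auto
    have "card (P \<inter> S) \<le> card S" unfolding S_def using finite_BB by (intro card_mono) auto
    then show "card (P \<inter> S) \<le> 1" using S2_card unfolding S_def by (meson le_trans)
    show "\<And>x. x \<in> P \<inter> S \<Longrightarrow> rho u x - g x \<le> \<mu>"
      using mu unfolding g_def P_def by (auto intro!: clamp_nonneg rnn2) (smt (verit) clamp_nonneg rnn2)
  qed (fact mu)
  finally have b: "(\<Sum>w\<in>P. rho u w - g w) \<le> \<mu>" .
  have "(\<Sum>w\<in>P. rho u w) = (\<Sum>w\<in>P. g w) + (\<Sum>w\<in>P. rho u w - g w)"
    by (simp add: sum_subtractf)
  then show ?thesis using a b unfolding P_def by linarith
qed

lemma lower_sum:
  assumes t: "0 \<le> t" "t \<le> 1" and mu: "\<And>w. w \<in> BB q M \<Longrightarrow> rho u w \<le> \<mu>" "0 \<le> \<mu>"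
  shows "t - \<mu> \<le> (\<Sum>w\<in>{w\<in>BB q M. Aw u w + rho u w < t}. rho u w)"
proof -
  define P where "P = {w\<in>BB q M. Aw u w + rho u w < t}"
  define S where "S = {w\<in>BB q M. Aw u w < t \<and> t \<le> Aw u w + rho u w}"
  define g where "g w = clamp (t - Aw u w) (rho u w)" for w
  have finB: "finite (BB q M)" by (rule finite_BB)
  have PB: "P \<subseteq> BB q M" unfolding P_def by auto
  have "t = (\<Sum>w\<in>BB q M. g w)" unfolding g_def I1[OF alph fr] using t unfolding clamp_def by simp
  also have "\<dots> = (\<Sum>w\<in>P. g w) + (\<Sum>w\<in>BB q M - P. g w)"
    using sum.subset_diff[OF PB finB, of g] by linarith
  also have "(\<Sum>w\<in>P. g w) = (\<Sum>w\<in>P. rho u w)"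
  proof (rule sum.cong[OF refl])
    fix w assume "w \<in> P"
    then have "Aw u w + rho u w < t" unfolding P_def by auto
    then show "g w = rho u w" unfolding g_def clamp_def using rnn2[of w] by auto
  qed
  also have "(\<Sum>w\<in>BB q M - P. g w) = (\<Sum>w\<in>(BB q M - P) \<inter> S. g w)"
  proof (rule sum.mono_neutral_right)
    show "finite (BB q M - P)" using finB by auto
    show "(BB q M - P) \<inter> S \<subseteq> BB q M - P" by auto
    show "\<forall>i\<in>BB q M - P - (BB q M - P) \<inter> S. g i = 0"
    proof
      fix w assume "w \<in> BB q M - P - (BB q M - P) \<inter> S"
      then have "t \<le> Aw u w" unfolding P_def S_def by auto
      then show "g w = 0" unfolding g_def clamp_def using rnn2[of w] by auto
    qed
  qed
  also have "(\<Sum>w\<in>(BB q M - P) \<inter> S. g w) \<le> \<mu>"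
  proof (rule sum_card_le1)
    show "finite ((BB q M - P) \<inter> S)" using finB by auto
    have "card ((BB q M - P) \<inter> S) \<le> card S" unfolding S_def using finB by (intro card_mono) auto
    then show "card ((BB q M - P) \<inter> S) \<le> 1" using S2_card unfolding S_def by (meson le_trans)
    show "\<And>x. x \<in> (BB q M - P) \<inter> S \<Longrightarrow> g x \<le> \<mu>"
    proof -
      fix x assume "x \<in> (BB q M - P) \<inter> S"
      then have "rho u x \<le> \<mu>" using mu by auto
      then show "g x \<le> \<mu>" unfolding g_def using clamp_le[OF rnn2[of x]] by (meson order_trans)
    qed
  qed (fact mu)
  finally show ?thesis unfolding P_def by linarith
qed

lemma pre_BB: "pre u k M \<in> BB q M"
  unfolding BB_def pre_def using alph by auto

lemma card_pre_sum:
  assumes "P \<subseteq> BB q M"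
  shows "card {k. k < n \<and> pre u (j+k) M \<in> P} = (\<Sum>w\<in>P. card {k. k < n \<and> occurs_at w u (j+k)})"
proof -
  have finP: "finite P" using finite_subset[OF assms finite_BB] .
  have lenP: "\<And>w. w \<in> P \<Longrightarrow> length w = M" using assms unfolding BB_def by auto
  have "{k. k < n \<and> pre u (j+k) M \<in> P} = (\<Union>w\<in>P. {k. k < n \<and> occurs_at w u (j+k)})"
    using lenP unfolding occurs_pre by auto
  moreover have "card (\<Union>w\<in>P. {k. k < n \<and> occurs_at w u (j+k)}) = (\<Sum>w\<in>P. card {k. k < n \<and> occurs_at w u (j+k)})"
  proof (rule card_UN_disjoint[OF finP])
    show "\<forall>i\<in>P. finite {k. k < n \<and> occurs_at i u (j+k)}" by auto
    show "\<forall>i\<in>P. \<forall>ja\<in>P. i \<noteq> ja \<longrightarrow> {k. k < n \<and> occurs_at i u (j+k)} \<inter> {k. k < n \<and> occurs_at ja u (j+k)} = {}"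
      using lenP unfolding occurs_pre by auto
  qed
  ultimately show ?thesis by simp
qed

lemma uconv_window:
  assumes "w \<noteq> []"
  shows "uconv (\<lambda>j n. real (card {k. k < Suc n \<and> occurs_at w u (j+k)}) / real (n+1)) (rho u w)"
proof (rule uconv_close[OF huf_rho[OF alph fr, unfolded huf_uconv], where C = "real (length w)"])
  fix j n
  have w1: "occ_count u w j n \<le> card {k. k < Suc n \<and> occurs_at w u (j+k)}" using occ_count_window1[OF assms] .
  have w2: "card {k. k < Suc n \<and> occurs_at w u (j+k)} \<le> occ_count u w j n + length w" using occ_count_window2 .
  have "\<bar>real (card {k. k < Suc n \<and> occurs_at w u (j+k)}) - real (occ_count u w j n)\<bar> \<le> real (length w)"
    using w1 w2 by linarith
  then have "\<bar>real (card {k. k < Suc n \<and> occurs_at w u (j+k)}) - real (occ_count u w j n)\<bar> / real (n+1) \<le> real (length w) / real (n+1)"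
    by (simp add: divide_right_mono)
  then show "\<bar>real (card {k. k < Suc n \<and> occurs_at w u (j+k)}) / real (n+1) - real (occ_count u w j n) / real (n+1)\<bar> \<le> real (length w) / real (n+1)"
    by (simp add: diff_divide_distrib[symmetric] abs_divide)
qed

end

context
  fixes u :: "nat \<Rightarrow> nat" and q :: nat
  assumes alph: "\<forall>n. u n < q"
    and rec: "recurrent u"
    and ap: "aperiodic u"
    and fr: "\<forall>w. w \<noteq> [] \<and> factor w u \<longrightarrow> (\<exists>\<rho>. has_uniform_freq u w \<rho> \<and> \<rho> \<noteq> 0)"
begin

lemma aa_equidist:
  assumes t: "0 \<le> t" "t \<le> 1" and e: "0 < \<epsilon>"
  shows "\<exists>N. \<forall>n\<ge>N. \<forall>j. \<bar>real (card {k. k < n \<and> aa u (j + k) < t}) / real n - t\<bar> < \<epsilon>"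
proof -
  obtain M0 where M0: "\<forall>M\<ge>M0. \<forall>w. length w = M \<longrightarrow> rho u w < \<epsilon>/4"
    using rho_small[OF alph rec ap fr, of "\<epsilon>/4"] e by auto
  define M where "M = max M0 1"
  have mu: "rho u w \<le> \<epsilon>/4" if "w \<in> BB q M" for w
  proof -
    have "length w = M" "M0 \<le> M" using that unfolding BB_def M_def by auto
    then have "rho u w < \<epsilon>/4" using M0 by blast
    then show ?thesis by simp
  qed
  define Pin where "Pin = {w\<in>BB q M. Aw u w + rho u w < t}"
  define Pout where "Pout = {w\<in>BB q M. Aw u w < t}"
  have sin: "t - \<epsilon>/4 \<le> (\<Sum>w\<in>Pin. rho u w)" unfolding Pin_def
    by (rule lower_sum[OF alph fr t mu]) (use e in auto)
  have sout: "(\<Sum>w\<in>Pout. rho u w) \<le> t + \<epsilon>/4" unfolding Pout_def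
    by (rule upper_sum[OF alph fr t mu]) (use e in auto)
  have ne: "\<And>w. w \<in> BB q M \<Longrightarrow> w \<noteq> []" unfolding BB_def M_def by auto
  have finin: "finite Pin" "finite Pout" unfolding Pin_def Pout_def using finite_BB by auto
  have Uin: "uconv (\<lambda>j n. \<Sum>w\<in>Pin. real (card {k. k < Suc n \<and> occurs_at w u (j+k)}) / real (n+1)) (\<Sum>w\<in>Pin. rho u w)"
    by (rule uconv_sum[OF finin(1)]) (rule uconv_window[OF alph fr], use ne Pin_def in auto)
  have Uout: "uconv (\<lambda>j n. \<Sum>w\<in>Pout. real (card {k. k < Suc n \<and> occurs_at w u (j+k)}) / real (n+1)) (\<Sum>w\<in>Pout. rho u w)"
    by (rule uconv_sum[OF finin(2)]) (rule uconv_window[OF alph fr], use ne Pout_def in auto)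
  obtain N1 where N1: "\<forall>n\<ge>N1. \<forall>j. \<bar>(\<Sum>w\<in>Pin. real (card {k. k < Suc n \<and> occurs_at w u (j+k)}) / real (n+1)) - (\<Sum>w\<in>Pin. rho u w)\<bar> < \<epsilon>/4"
    using Uin e unfolding uconv_def by (meson divide_pos_pos zero_less_numeral)
  obtain N2 where N2: "\<forall>n\<ge>N2. \<forall>j. \<bar>(\<Sum>w\<in>Pout. real (card {k. k < Suc n \<and> occurs_at w u (j+k)}) / real (n+1)) - (\<Sum>w\<in>Pout. rho u w)\<bar> < \<epsilon>/4"
    using Uout e unfolding uconv_def by (meson divide_pos_pos zero_less_numeral)
  have PinB: "Pin \<subseteq> BB q M" and PoutB: "Pout \<subseteq> BB q M" unfolding Pin_def Pout_def by auto
  show ?thesis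
  proof (intro exI allI impI)
    fix n j assume n: "Suc (max N1 N2) \<le> n"
    then obtain n' where n': "n = Suc n'" "max N1 N2 \<le> n'" by (metis Suc_le_D Suc_le_mono)
    define C where "C = card {k. k < n \<and> aa u (j + k) < t}"
    define Ci where "Ci = card {k. k < n \<and> pre u (j+k) M \<in> Pin}"
    define Co where "Co = card {k. k < n \<and> pre u (j+k) M \<in> Pout}"
    have c1: "Ci \<le> C" unfolding Ci_def C_def
    proof (rule card_mono)
      show "finite {k. k < n \<and> aa u (j + k) < t}" by auto
      show "{k. k < n \<and> pre u (j + k) M \<in> Pin} \<subseteq> {k. k < n \<and> aa u (j + k) < t}"
      proof
        fix k assume "k \<in> {k. k < n \<and> pre u (j + k) M \<in> Pin}"
        then show "k \<in> {k. k < n \<and> aa u (j + k) < t}"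
          using aa_bounds[OF alph fr, of "j+k" M] unfolding Pin_def by auto
      qed
    qed
    have c2: "C \<le> Co" unfolding Co_def C_def
    proof (rule card_mono)
      show "finite {k. k < n \<and> pre u (j + k) M \<in> Pout}" by auto
      show "{k. k < n \<and> aa u (j + k) < t} \<subseteq> {k. k < n \<and> pre u (j + k) M \<in> Pout}"
      proof
        fix k assume "k \<in> {k. k < n \<and> aa u (j + k) < t}"
        then show "k \<in> {k. k < n \<and> pre u (j + k) M \<in> Pout}"
          using aa_bounds[OF alph fr, of "j+k" M] pre_BB[OF alph fr, of "j+k" M] unfolding Pout_def by auto
      qed
    qed
    have ei: "real Ci / real n = (\<Sum>w\<in>Pin. real (card {k. k < Suc n' \<and> occurs_at w u (j+k)}) / real (n'+1))"
      unfolding Ci_def card_pre_sum[OF alph fr PinB] n'(1) by (simp add: sum_divide_distrib)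
    have eo: "real Co / real n = (\<Sum>w\<in>Pout. real (card {k. k < Suc n' \<and> occurs_at w u (j+k)}) / real (n'+1))"
      unfolding Co_def card_pre_sum[OF alph fr PoutB] n'(1) by (simp add: sum_divide_distrib)
    have "N1 \<le> n'" "N2 \<le> n'" using n'(2) by auto
    then have h1: "\<bar>(\<Sum>w\<in>Pin. real (card {k. k < Suc n' \<and> occurs_at w u (j+k)}) / real (n'+1)) - (\<Sum>w\<in>Pin. rho u w)\<bar> < \<epsilon>/4"
      and h2: "\<bar>(\<Sum>w\<in>Pout. real (card {k. k < Suc n' \<and> occurs_at w u (j+k)}) / real (n'+1)) - (\<Sum>w\<in>Pout. rho u w)\<bar> < \<epsilon>/4"
      using N1 N2 by blast+
    have "real Ci / real n > t - \<epsilon>/2" using h1 sin unfolding ei by linarith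
    moreover have "real Co / real n < t + \<epsilon>/2" using h2 sout unfolding eo by linarith
    moreover have "real Ci / real n \<le> real C / real n" "real C / real n \<le> real Co / real n"
      using c1 c2 by (auto intro: divide_right_mono)
    ultimately show "\<bar>real C / real n - t\<bar> < \<epsilon>" using e by linarith
  qed
qed

lemma aa_canonical: "canonical (aa u)"
  unfolding canonical_def
  using aa_inj[OF alph rec ap fr] aa_01[OF alph fr] aa_equidist by auto

end

theorem mainTheorem3:
  fixes u :: "nat \<Rightarrow> nat" and q :: nat
  assumes "\<forall>n. u n < q"
    and "recurrent u"
    and "aperiodic u"
  shows "ergodic_perm (valid_perm u) \<longleftrightarrow>
    (\<forall>w. w \<noteq> [] \<and> factor w u \<longrightarrow> (\<exists>\<rho>. has_uniform_freq u w \<rho> \<and> \<rho> \<noteq> 0))"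
proof
  assume "ergodic_perm (valid_perm u)"
  then obtain a where "canonical a" "\<forall>i j. a i < a j \<longleftrightarrow> valid_perm u i j"
    unfolding ergodic_perm_def by blast
  then show "\<forall>w. w \<noteq> [] \<and> factor w u \<longrightarrow> (\<exists>\<rho>. has_uniform_freq u w \<rho> \<and> \<rho> \<noteq> 0)"
    using dir1 assms(2) by blast
next
  assume fr: "\<forall>w. w \<noteq> [] \<and> factor w u \<longrightarrow> (\<exists>\<rho>. has_uniform_freq u w \<rho> \<and> \<rho> \<noteq> 0)"
  show "ergodic_perm (valid_perm u)"
    unfolding ergodic_perm_def
    using aa_canonical[OF assms fr] aa_iff[OF assms fr] by blast
qed

end
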